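(* Let $\Pi$ be a finite, satisfiable set of linear constraints over $x_1,\dots,x_D$, let $\mathrm{CL}$ be the constraint layer built from $\Pi$ and the ordering $x_1,\dots,x_D$, and let $\mathrm{CL}^{\ge}$ be the constraint layer built from $\Pi^{\ge}$ and the same ordering. Let $\tilde x\in\mathbb{R}^D$. Then: (1) if $\mathrm{CL}(\tilde x)=\mathrm{CL}^{\ge}(\tilde x)$, then $\mathrm{CL}(\tilde x)$ is optimal with respect to $\Pi$; (2) otherwise, $\mathrm{CL}(\tilde x)$ tends to $\mathrm{CL}^{\ge}(\tilde x)$ as the $\epsilon$ values used to compute $\mathrm{CL}(\tilde x)$ tend to $0$ (i.e., regarding $\mathrm{CL}(\tilde x)$, with all other aspects of the computation fixed, as a function of the $\epsilon$ values $\epsilon_1,\dots,\epsilon_k$, one has $\lim_{(\epsilon_1,\dots,\epsilon_k)\to 0}\mathrm{CL}(\tilde x)=\mathrm{CL}^{\ge}(\tilde x)$).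
   Context: A constraint is a linear inequality $\phi:\ \sum_{k=1}^D w_k x_k + b \unrhd 0$ with $w_k,b\in\mathbb{R}$ and $\unrhd\in\{\ge,>\}$; it is strict if $\unrhd$ is $>$. A point $\tilde x\in\mathbb{R}^D$ satisfies $\phi$ if $\sum_k w_k\tilde x_k+b\unrhd 0$, and satisfies a set $\Pi$ if it satisfies every member; $\Pi$ is satisfiable if some point satisfies it. $\Pi^{\ge}$ denotes the set obtained from $\Pi$ by replacing each strict constraint $\sum_kw_kx_k+b>0$ by $\sum_kw_kx_k+b\ge0$. Variable $x_j$ appears positively (resp. negatively) in $\phi$ if $w_j>0$ (resp. $w_j<0$). For a set $\Gamma$ of constraints, $\Gamma^+_j$ (resp. $\Gamma^-_j$) is the subset in which $x_j$ appears positively (resp. negatively). Reduction: for $\phi^1=\sum_k w^1_kx_k+b^1\unrhd^1 0\in\Gamma^-_j$ and $\phi^2=\sum_k w^2_kx_k+b^2\unrhd^2 0\in\Gamma^+_j$, $red_j(\phi^1,\phi^2)$ is $\sum_{k\ne j}(w^1_k|w^2_j|+w^2_k|w^1_j|)x_k + b^1|w^2_j|+b^2|w^1_j| \unrhd 0$, where $\unrhd$ is $\ge$ if both $\unrhd^1,\unrhd^2$ are $\ge$, and $>$ otherwise. Sets $\Pi_i$ (for a constraint set $\Pi$): $\Pi_D=\Pi$, and for $i<D$, with $j=i+1$, $\Pi_i=(\Pi_j\setminus(\Pi^-_j\cup\Pi^+_j))\cup\{red_j(\phi^1,\phi^2):\phi^1\in\Pi^-_j,\phi^2\in\Pi^+_j\}$,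 where $\Pi^\pm_j$ means $(\Pi_j)^\pm_j$. (Thus only $x_1,\dots,x_i$ occur in $\Pi_i$; we write $\Pi_i^\pm$ for $(\Pi_i)^\pm_i$.) For $\phi=\sum_kw_kx_k+b\unrhd0$ with $w_i\neq0$, let $\varepsilon^\phi_i=-\sum_{k\ne i}(w_k/w_i)x_k-b/w_i$; for $\phi\in\Pi_i$ it depends only on $x_1,\dots,x_{i-1}$. Constraint layer built from $\Pi$: given $\tilde x\in\mathbb{R}^D$, $\mathrm{CL}(\tilde x)\in\mathbb{R}^D$ is computed coordinatewise for $i=1,\dots,D$. Let $\varepsilon^\phi_i(\mathrm{CL}(\tilde x))$ denote $\varepsilon^\phi_i$ evaluated at the already computed values $\mathrm{CL}(\tilde x)_1,\dots,\mathrm{CL}(\tilde x)_{i-1}$, and set $ub_i=\min\{\varepsilon^\phi_i(\mathrm{CL}(\tilde x)):\phi\in\Pi_i^-\}$, $lb_i=\max\{\varepsilon^\phi_i(\mathrm{CL}(\tilde x)):\phi\in\Pi_i^+\}$ (with $\min\emptyset=+\infty$, $\max\emptyset=-\infty$). Then $\mathrm{CL}(\tilde x)_i=\min^i(\max^i(\tilde x_i,lb_i),ub_i)$, where $\max^i(a,lb_i)$ equals $v=\max(a,lb_i)$ unless some strict $\phi\in\Pi_i^+$ has $v=\varepsilon^\phi_i(\mathrm{CL}(\tilde x))$, in which case it equals $v+\epsilon$ for a chosen $\epsilon>0$ small enough that $lb_i+\epsilon< ub_i$; symmetrically $\min^i(a,ub_i)$ equals $u=\min(a,ub_i)$ unless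 some strict $\phi\in\Pi_i^-$ has $u=\varepsilon^\phi_i(\mathrm{CL}(\tilde x))$, in which case it equals $u-\epsilon$ for a chosen $\epsilon>0$ small enough that $ub_i-\epsilon>lb_i$. The chosen positive numbers are the $\epsilon$ values used to compute $\mathrm{CL}(\tilde x)$. Since $\Pi^{\ge}$ has no strict constraints, $\mathrm{CL}^{\ge}$ uses no $\epsilon$ values: $\mathrm{CL}^{\ge}(\tilde x)_i=\min(\max(\tilde x_i,lb_i),ub_i)$ with bounds computed from $\Pi^{\ge}$. Optimality: for a set of constraints $\Gamma$ and $\tilde x\in\mathbb{R}^D$, a point $y\in\mathbb{R}^D$ is optimal (for $\tilde x$) with respect to $\Gamma$ if $y$ satisfies $\Gamma$ and there is no $\tilde x'\neq y$ satisfying $\Gamma$ with $|\tilde x'_i-\tilde x_i|\le|y_i-\tilde x_i|$ for all $i=1,\dots,D$. *)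

theory Defs
  imports Complex_Main "HOL-Library.Extended_Real"
begin

text \<open>Vectors in R^D are functions nat => real, with the coordinates 1..D relevant.\<close>

datatype constr = Constr (wt: "nat \<Rightarrow> real") (bias: real) (strict: bool)

definition lhs :: "nat \<Rightarrow> constr \<Rightarrow> (nat \<Rightarrow> real) \<Rightarrow> real" where
  "lhs D c x = (\<Sum>k=1..D. wt c k * x k) + bias c"

definition sat :: "nat \<Rightarrow> constr \<Rightarrow> (nat \<Rightarrow> real) \<Rightarrow> bool" where
  "sat D c x = (if strict c then lhs D c x > 0 else lhs D c x \<ge> 0)"

definition sat_set :: "nat \<Rightarrow> constr set \<Rightarrow> (nat \<Rightarrow> real) \<Rightarrow> bool" where
  "sat_set D \<Gamma> x = (\<forall>c\<in>\<Gamma>. sat D c x)"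

definition satisfiable :: "nat \<Rightarrow> constr set \<Rightarrow> bool" where
  "satisfiable D \<Gamma> = (\<exists>x. sat_set D \<Gamma> x)"

definition geq_set :: "constr set \<Rightarrow> constr set" where
  "geq_set \<Gamma> = (\<lambda>c. Constr (wt c) (bias c) False) ` \<Gamma>"

definition poss :: "nat \<Rightarrow> constr set \<Rightarrow> constr set" where
  "poss j \<Gamma> = {c\<in>\<Gamma>. wt c j > 0}"

definition negs :: "nat \<Rightarrow> constr set \<Rightarrow> constr set" where
  "negs j \<Gamma> = {c\<in>\<Gamma>. wt c j < 0}"

definition red :: "nat \<Rightarrow> constr \<Rightarrow> constr \<Rightarrow> constr" where
  "red j c1 c2 = Constr
     (\<lambda>k. if k = j then 0 else wt c1 k * \<bar>wt c2 j\<bar> + wt c2 k * \<bar>wt c1 j\<bar>)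
     (bias c1 * \<bar>wt c2 j\<bar> + bias c2 * \<bar>wt c1 j\<bar>)
     (strict c1 \<or> strict c2)"

definition elim_step :: "nat \<Rightarrow> constr set \<Rightarrow> constr set" where
  "elim_step j \<Gamma> = (\<Gamma> - (negs j \<Gamma> \<union> poss j \<Gamma>))
      \<union> {red j c1 c2 | c1 c2. c1 \<in> negs j \<Gamma> \<and> c2 \<in> poss j \<Gamma>}"

text \<open>fm \<Pi> D k = \<Pi>_{D-k}.\<close>
primrec fm :: "constr set \<Rightarrow> nat \<Rightarrow> nat \<Rightarrow> constr set" where
  "fm \<Pi> D 0 = \<Pi>"
| "fm \<Pi> D (Suc k) = elim_step (D - k) (fm \<Pi> D k)"

definition PiSet :: "constr set \<Rightarrow> nat \<Rightarrow> nat \<Rightarrow> constr set" where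
  "PiSet \<Pi> D i = fm \<Pi> D (D - i)"

definition epsv :: "nat \<Rightarrow> constr \<Rightarrow> nat \<Rightarrow> (nat \<Rightarrow> real) \<Rightarrow> real" where
  "epsv D c i y = - (\<Sum>k\<in>{1..D} - {i}. (wt c k / wt c i) * y k) - bias c / wt c i"

definition lbE :: "constr set \<Rightarrow> nat \<Rightarrow> nat \<Rightarrow> (nat \<Rightarrow> real) \<Rightarrow> ereal" where
  "lbE \<Pi> D i y = (if poss i (PiSet \<Pi> D i) = {} then -\<infinity>
      else ereal (Max ((\<lambda>c. epsv D c i y) ` poss i (PiSet \<Pi> D i))))"

definition ubE :: "constr set \<Rightarrow> nat \<Rightarrow> nat \<Rightarrow> (nat \<Rightarrow> real) \<Rightarrow> ereal" where
  "ubE \<Pi> D i y = (if negs i (PiSet \<Pi> D i) = {} then \<infinity>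
      else ereal (Min ((\<lambda>c. epsv D c i y) ` negs i (PiSet \<Pi> D i))))"

definition vmax :: "constr set \<Rightarrow> nat \<Rightarrow> nat \<Rightarrow> (nat \<Rightarrow> real) \<Rightarrow> real \<Rightarrow> real" where
  "vmax \<Pi> D i y a = (if poss i (PiSet \<Pi> D i) = {} then a
      else max a (Max ((\<lambda>c. epsv D c i y) ` poss i (PiSet \<Pi> D i))))"

definition adj_low :: "constr set \<Rightarrow> nat \<Rightarrow> nat \<Rightarrow> (nat \<Rightarrow> real) \<Rightarrow> real \<Rightarrow> bool" where
  "adj_low \<Pi> D i y a = (\<exists>c\<in>poss i (PiSet \<Pi> D i). strict c \<and> vmax \<Pi> D i y a = epsv D c i y)"

definition maxi :: "constr set \<Rightarrow> nat \<Rightarrow> (nat \<Rightarrow> bool \<Rightarrow> real) \<Rightarrow> nat \<Rightarrow> (nat \<Rightarrow> real) \<Rightarrow> real \<Rightarrow> real" where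
  "maxi \<Pi> D e i y a = (if adj_low \<Pi> D i y a then vmax \<Pi> D i y a + e i False else vmax \<Pi> D i y a)"

definition umin :: "constr set \<Rightarrow> nat \<Rightarrow> nat \<Rightarrow> (nat \<Rightarrow> real) \<Rightarrow> real \<Rightarrow> real" where
  "umin \<Pi> D i y a = (if negs i (PiSet \<Pi> D i) = {} then a
      else min a (Min ((\<lambda>c. epsv D c i y) ` negs i (PiSet \<Pi> D i))))"

definition adj_up :: "constr set \<Rightarrow> nat \<Rightarrow> nat \<Rightarrow> (nat \<Rightarrow> real) \<Rightarrow> real \<Rightarrow> bool" where
  "adj_up \<Pi> D i y a = (\<exists>c\<in>negs i (PiSet \<Pi> D i). strict c \<and> umin \<Pi> D i y a = epsv D c i y)"

definition mini :: "constr set \<Rightarrow> nat \<Rightarrow> (nat \<Rightarrow> bool \<Rightarrow> real) \<Rightarrow> nat \<Rightarrow> (nat \<Rightarrow> real) \<Rightarrow> real \<Rightarrow> real" where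
  "mini \<Pi> D e i y a = (if adj_up \<Pi> D i y a then umin \<Pi> D i y a - e i True else umin \<Pi> D i y a)"

definition coord :: "constr set \<Rightarrow> nat \<Rightarrow> (nat \<Rightarrow> bool \<Rightarrow> real) \<Rightarrow> nat \<Rightarrow> (nat \<Rightarrow> real) \<Rightarrow> real \<Rightarrow> real" where
  "coord \<Pi> D e i y a = mini \<Pi> D e i y (maxi \<Pi> D e i y a)"

primrec clp :: "constr set \<Rightarrow> nat \<Rightarrow> (nat \<Rightarrow> bool \<Rightarrow> real) \<Rightarrow> (nat \<Rightarrow> real) \<Rightarrow> nat \<Rightarrow> (nat \<Rightarrow> real)" where
  "clp \<Pi> D e x 0 = (\<lambda>_. 0)"
| "clp \<Pi> D e x (Suc i) = (clp \<Pi> D e x i)(Suc i := coord \<Pi> D e (Suc i) (clp \<Pi> D e x i) (x (Suc i)))"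

definition CL :: "constr set \<Rightarrow> nat \<Rightarrow> (nat \<Rightarrow> bool \<Rightarrow> real) \<Rightarrow> (nat \<Rightarrow> real) \<Rightarrow> (nat \<Rightarrow> real)" where
  "CL \<Pi> D e x = clp \<Pi> D e x D"

definition valid_at :: "constr set \<Rightarrow> nat \<Rightarrow> (nat \<Rightarrow> bool \<Rightarrow> real) \<Rightarrow> nat \<Rightarrow> (nat \<Rightarrow> real) \<Rightarrow> real \<Rightarrow> bool" where
  "valid_at \<Pi> D e i y a =
     ((adj_low \<Pi> D i y a \<longrightarrow> 0 < e i False \<and> lbE \<Pi> D i y + ereal (e i False) < ubE \<Pi> D i y) \<and>
      (adj_up \<Pi> D i y (maxi \<Pi> D e i y a) \<longrightarrow>
          0 < e i True \<and> ubE \<Pi> D i y - ereal (e i True) > lbE \<Pi> D i y))"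

definition valid_eps :: "constr set \<Rightarrow> nat \<Rightarrow> (nat \<Rightarrow> bool \<Rightarrow> real) \<Rightarrow> (nat \<Rightarrow> real) \<Rightarrow> bool" where
  "valid_eps \<Pi> D e x = (\<forall>i\<in>{1..D}. valid_at \<Pi> D e i (clp \<Pi> D e x (i - 1)) (x i))"

definition CLge :: "constr set \<Rightarrow> nat \<Rightarrow> (nat \<Rightarrow> real) \<Rightarrow> (nat \<Rightarrow> real)" where
  "CLge \<Pi> D x = CL (geq_set \<Pi>) D (\<lambda>_ _. 0) x"

definition optimal :: "nat \<Rightarrow> constr set \<Rightarrow> (nat \<Rightarrow> real) \<Rightarrow> (nat \<Rightarrow> real) \<Rightarrow> bool" where
  "optimal D \<Gamma> x y = (sat_set D \<Gamma> y \<and>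
     \<not> (\<exists>x'. sat_set D \<Gamma> x' \<and> (\<exists>i\<in>{1..D}. x' i \<noteq> y i) \<and>
            (\<forall>i\<in>{1..D}. \<bar>x' i - x i\<bar> \<le> \<bar>y i - x i\<bar>)))"

end

theory Submission
  imports Defs
begin


definition strip :: "constr \<Rightarrow> constr" where
  "strip c = Constr (wt c) (bias c) False"

lemma geq_set_strip: "geq_set \<Gamma> = strip ` \<Gamma>"
  by (simp add: geq_set_def strip_def)

lemma wt_strip[simp]: "wt (strip c) = wt c" and bias_strip[simp]: "bias (strip c) = bias c"
  by (simp_all add: strip_def)

lemma poss_strip: "poss j (strip ` G) = strip ` poss j G"
  by (auto simp: poss_def)
lemma negs_strip: "negs j (strip ` G) = strip ` negs j G"
  by (auto simp: negs_def)

lemma red_strip: "red j (strip c1) (strip c2) = strip (red j c1 c2)"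
  unfolding red_def strip_def constr.sel by simp

lemma elim_strip: "elim_step j (strip ` G) = strip ` elim_step j G"
proof -
  have A: "strip ` G - (negs j (strip ` G) \<union> poss j (strip ` G)) = strip ` (G - (negs j G \<union> poss j G))"
    by (auto simp: negs_def poss_def) (metis wt_strip)+
  have B: "{red j c1 c2 | c1 c2. c1 \<in> negs j (strip ` G) \<and> c2 \<in> poss j (strip ` G)}
      = strip ` {red j c1 c2 | c1 c2. c1 \<in> negs j G \<and> c2 \<in> poss j G}"
    unfolding negs_strip poss_strip
  proof (intro set_eqI iffI)
    fix z assume "z \<in> {red j c1 c2 | c1 c2. c1 \<in> strip ` negs j G \<and> c2 \<in> strip ` poss j G}"
    then obtain a b where "a \<in> negs j G" "b \<in> poss j G" "z = red j (strip a) (strip b)" by blast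
    then show "z \<in> strip ` {red j c1 c2 | c1 c2. c1 \<in> negs j G \<and> c2 \<in> poss j G}"
      unfolding red_strip by blast
  next
    fix z assume "z \<in> strip ` {red j c1 c2 | c1 c2. c1 \<in> negs j G \<and> c2 \<in> poss j G}"
    then obtain a b where "a \<in> negs j G" "b \<in> poss j G" "z = strip (red j a b)" by blast
    then show "z \<in> {red j c1 c2 | c1 c2. c1 \<in> strip ` negs j G \<and> c2 \<in> strip ` poss j G}"
      unfolding red_strip[symmetric] by blast
  qed
  show ?thesis unfolding elim_step_def A B image_Un by simp
qed

lemma fm_strip: "fm (strip ` \<Pi>) D m = strip ` fm \<Pi> D m"
  by (induction m) (simp_all add: elim_strip)

lemma PiSet_geq: "PiSet (geq_set \<Pi>) D i = strip ` PiSet \<Pi> D i"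
  by (simp add: PiSet_def geq_set_strip fm_strip)

lemma epsv_strip[simp]: "epsv D (strip c) i y = epsv D c i y"
  by (simp add: epsv_def)

lemma img_strip: "(\<lambda>c. epsv D c i y) ` strip ` S = (\<lambda>c. epsv D c i y) ` S"
  by (simp add: image_image)

lemma vmax_geq: "vmax (geq_set \<Pi>) D i y a = vmax \<Pi> D i y a"
  by (simp add: vmax_def PiSet_geq poss_strip img_strip)

lemma umin_geq: "umin (geq_set \<Pi>) D i y a = umin \<Pi> D i y a"
  by (simp add: umin_def PiSet_geq negs_strip img_strip)

lemma coord_geq0: "coord (geq_set \<Pi>) D (\<lambda>_ _. 0) i y a = umin \<Pi> D i y (vmax \<Pi> D i y a)"
  by (simp add: coord_def mini_def maxi_def vmax_geq umin_geq)

lemma finite_elim: "finite G \<Longrightarrow> finite (elim_step j G)"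
proof -
  assume f: "finite G"
  have "{red j c1 c2 | c1 c2. c1 \<in> negs j G \<and> c2 \<in> poss j G} = (\<lambda>(c1,c2). red j c1 c2) ` (negs j G \<times> poss j G)"
    by auto
  moreover have "finite (negs j G \<times> poss j G)" using f by (simp add: negs_def poss_def)
  ultimately show ?thesis using f by (simp add: elim_step_def)
qed

lemma finite_fm: "finite \<Pi> \<Longrightarrow> finite (fm \<Pi> D m)"
  by (induction m) (simp_all add: finite_elim)

lemma wt_zero_fm: "c \<in> fm \<Pi> D m \<Longrightarrow> D - m < k \<Longrightarrow> k \<le> D \<Longrightarrow> wt c k = 0"
proof (induction m arbitrary: c)
  case 0 then show ?case by simp
next
  case (Suc m)
  show ?case
  proof (cases "m < D")
    case False
    then have "D - Suc m = D - m" by simp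
    from Suc.prems(1) have "c \<in> fm \<Pi> D m - (negs (D-m) (fm \<Pi> D m) \<union> poss (D-m) (fm \<Pi> D m)) \<or>
      (\<exists>c1 c2. c = red (D-m) c1 c2 \<and> c1 \<in> negs (D-m) (fm \<Pi> D m) \<and> c2 \<in> poss (D-m) (fm \<Pi> D m))"
      by (auto simp: elim_step_def)
    then show ?thesis
    proof
      assume "c \<in> fm \<Pi> D m - (negs (D-m) (fm \<Pi> D m) \<union> poss (D-m) (fm \<Pi> D m))"
      then show ?thesis using Suc.IH Suc.prems \<open>D - Suc m = D - m\<close> by auto
    next
      assume "\<exists>c1 c2. c = red (D-m) c1 c2 \<and> c1 \<in> negs (D-m) (fm \<Pi> D m) \<and> c2 \<in> poss (D-m) (fm \<Pi> D m)"
      then obtain c1 c2 where "c = red (D-m) c1 c2" "c1 \<in> fm \<Pi> D m" "c2 \<in> fm \<Pi> D m"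
        by (auto simp: negs_def poss_def)
      then show ?thesis using Suc.IH[of c1] Suc.IH[of c2] Suc.prems \<open>D - Suc m = D - m\<close>
        by (auto simp: red_def)
    qed
  next
    case True
    then have k: "k = D - m \<or> D - m < k" using Suc.prems by auto
    from Suc.prems(1) have "c \<in> fm \<Pi> D m - (negs (D-m) (fm \<Pi> D m) \<union> poss (D-m) (fm \<Pi> D m)) \<or>
      (\<exists>c1 c2. c = red (D-m) c1 c2 \<and> c1 \<in> negs (D-m) (fm \<Pi> D m) \<and> c2 \<in> poss (D-m) (fm \<Pi> D m))"
      by (auto simp: elim_step_def)
    then show ?thesis
    proof
      assume a: "c \<in> fm \<Pi> D m - (negs (D-m) (fm \<Pi> D m) \<union> poss (D-m) (fm \<Pi> D m))"
      then have "wt c (D-m) = 0" by (auto simp: negs_def poss_def)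
      then show ?thesis using k Suc.IH a Suc.prems by auto
    next
      assume "\<exists>c1 c2. c = red (D-m) c1 c2 \<and> c1 \<in> negs (D-m) (fm \<Pi> D m) \<and> c2 \<in> poss (D-m) (fm \<Pi> D m)"
      then obtain c1 c2 where "c = red (D-m) c1 c2" "c1 \<in> fm \<Pi> D m" "c2 \<in> fm \<Pi> D m"
        by (auto simp: negs_def poss_def)
      then show ?thesis using k Suc.IH[of c1] Suc.IH[of c2] Suc.prems
        by (auto simp: red_def)
    qed
  qed
qed

lemma wt_zero_PiSet: "c \<in> PiSet \<Pi> D i \<Longrightarrow> i < k \<Longrightarrow> k \<le> D \<Longrightarrow> wt c k = 0"
  unfolding PiSet_def by (erule wt_zero_fm) auto

lemma PiSet_pred: "1 \<le> i \<Longrightarrow> i \<le> D \<Longrightarrow> PiSet \<Pi> D (i-1) = elim_step i (PiSet \<Pi> D i)"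
proof -
  assume "1 \<le> i" "i \<le> D"
  then have "D - (i-1) = Suc (D - i)" "D - (D - i) = i" by auto
  then show ?thesis by (simp add: PiSet_def)
qed

lemma PiSet_D: "PiSet \<Pi> D D = \<Pi>" by (simp add: PiSet_def)


lemma wt_red: "wt c1 j < 0 \<Longrightarrow> 0 < wt c2 j \<Longrightarrow>
   wt (red j c1 c2) = (\<lambda>k. wt c1 k * \<bar>wt c2 j\<bar> + wt c2 k * \<bar>wt c1 j\<bar>)"
  unfolding red_def constr.sel by (auto simp: abs_if)

lemma lhs_red: "wt c1 j < 0 \<Longrightarrow> 0 < wt c2 j \<Longrightarrow>
   lhs D (red j c1 c2) z = \<bar>wt c2 j\<bar> * lhs D c1 z + \<bar>wt c1 j\<bar> * lhs D c2 z"
proof -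
  assume w: "wt c1 j < 0" "0 < wt c2 j"
  have g: "\<And>A B. (\<Sum>k=1..D. (wt c1 k * A + wt c2 k * B) * z k) = A * (\<Sum>k=1..D. wt c1 k * z k) + B * (\<Sum>k=1..D. wt c2 k * z k)"
    by (simp add: sum.distrib sum_distrib_left algebra_simps)
  show ?thesis unfolding lhs_def wt_red[OF w] g unfolding red_def constr.sel by (simp add: algebra_simps)
qed

lemma strict_red: "strict (red j c1 c2) = (strict c1 \<or> strict c2)"
  unfolding red_def by simp

lemma sat_ge: "sat D c z \<Longrightarrow> lhs D c z \<ge> 0"
  by (auto simp: sat_def split: if_splits)

lemma sat_red: "wt c1 j < 0 \<Longrightarrow> 0 < wt c2 j \<Longrightarrow> sat D c1 z \<Longrightarrow> sat D c2 z \<Longrightarrow> sat D (red j c1 c2) z"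
proof -
  assume a: "wt c1 j < 0" "0 < wt c2 j" "sat D c1 z" "sat D c2 z"
  have p1: "\<bar>wt c1 j\<bar> > 0" "\<bar>wt c2 j\<bar> > 0" using a by auto
  have g: "lhs D c1 z \<ge> 0" "lhs D c2 z \<ge> 0" using a sat_ge by auto
  have "\<bar>wt c2 j\<bar> * lhs D c1 z \<ge> 0" "\<bar>wt c1 j\<bar> * lhs D c2 z \<ge> 0" using p1 g by auto
  moreover have "strict c1 \<Longrightarrow> \<bar>wt c2 j\<bar> * lhs D c1 z > 0" using a(3) p1 by (simp add: sat_def)
  moreover have "strict c2 \<Longrightarrow> \<bar>wt c1 j\<bar> * lhs D c2 z > 0" using a(4) p1 by (simp add: sat_def)
  ultimately show ?thesis unfolding sat_def lhs_red[OF a(1,2)] strict_red by auto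
qed

lemma elim_sound: "sat_set D G z \<Longrightarrow> sat_set D (elim_step j G) z"
  unfolding sat_set_def elim_step_def by (auto simp: negs_def poss_def intro!: sat_red)

lemma fm_sound: "sat_set D \<Pi> z \<Longrightarrow> sat_set D (fm \<Pi> D m) z"
  by (induction m) (simp_all add: elim_sound)

lemma PiSet_sound: "sat_set D \<Pi> z \<Longrightarrow> sat_set D (PiSet \<Pi> D i) z"
  unfolding PiSet_def by (rule fm_sound)

lemma lhs_eps: "i \<in> {1..D} \<Longrightarrow> wt c i \<noteq> 0 \<Longrightarrow> lhs D c z = wt c i * (z i - epsv D c i z)"
proof -
  assume i: "i \<in> {1..D}" and w: "wt c i \<noteq> 0"
  have "lhs D c z = wt c i * z i + (\<Sum>k\<in>{1..D} - {i}. wt c k * z k) + bias c"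
    unfolding lhs_def using i by (simp add: sum.remove)
  moreover have "wt c i * epsv D c i z = - (\<Sum>k\<in>{1..D} - {i}. wt c k * z k) - bias c"
    unfolding epsv_def using w by (simp add: algebra_simps sum_distrib_left)
  ultimately show ?thesis by (simp add: algebra_simps)
qed

lemma epsv_cong: "(\<And>k. k \<in> {1..D} \<Longrightarrow> k \<noteq> i \<Longrightarrow> wt c k \<noteq> 0 \<Longrightarrow> y k = y' k) \<Longrightarrow> epsv D c i y = epsv D c i y'"
  unfolding epsv_def by (intro arg_cong2[where f="(-)"] arg_cong[where f=uminus] sum.cong) auto

lemma epsv_upd[simp]: "epsv D c i (y(i := v)) = epsv D c i y"
  by (rule epsv_cong) auto

lemma fm_pair: assumes "i \<in> {1..D}" "c1 \<in> negs i G" "c2 \<in> poss i G" "sat D (red i c1 c2) y"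
  shows "epsv D c2 i y \<le> epsv D c1 i y \<and> (strict c1 \<or> strict c2 \<longrightarrow> epsv D c2 i y < epsv D c1 i y)"
proof -
  have w: "wt c1 i < 0" "wt c2 i > 0" using assms by (auto simp: negs_def poss_def)
  have "lhs D (red i c1 c2) y = \<bar>wt c2 i\<bar> * (wt c1 i * (y i - epsv D c1 i y)) + \<bar>wt c1 i\<bar> * (wt c2 i * (y i - epsv D c2 i y))"
    using lhs_red[OF w] lhs_eps[OF assms(1)] w by simp
  also have "\<dots> = (\<bar>wt c1 i\<bar> * \<bar>wt c2 i\<bar>) * (epsv D c1 i y - epsv D c2 i y)"
    using w by (simp add: abs_if algebra_simps mult_neg_pos)
  finally have e: "lhs D (red i c1 c2) y = (\<bar>wt c1 i\<bar> * \<bar>wt c2 i\<bar>) * (epsv D c1 i y - epsv D c2 i y)" .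
  have p: "\<bar>wt c1 i\<bar> * \<bar>wt c2 i\<bar> > 0" using w by (simp add: mult_neg_pos)
  from assms(4) have "lhs D (red i c1 c2) y \<ge> 0" "strict c1 \<or> strict c2 \<longrightarrow> lhs D (red i c1 c2) y > 0"
    by (auto simp: sat_def strict_red split: if_splits)
  then show ?thesis unfolding e using p by (auto simp: zero_le_mult_iff zero_less_mult_iff)
qed



lemma core:
  fixes f :: "constr \<Rightarrow> real" and P N :: "constr set"
  assumes fP: "finite P" and fN: "finite N"
  and pair: "\<forall>c1\<in>N. \<forall>c2\<in>P. f c2 \<le> f c1 \<and> (strict c1 \<or> strict c2 \<longrightarrow> f c2 < f c1)"
  and v_def: "v = (if P = {} then a else max a (Max (f`P)))"
  and al_def: "al = (\<exists>c\<in>P. strict c \<and> v = f c)"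
  and m_def: "m = (if al then v + e1 else v)"
  and u_def: "u = (if N = {} then m else min m (Min (f`N)))"
  and au_def: "au = (\<exists>c\<in>N. strict c \<and> u = f c)"
  and r_def: "r = (if au then u - e2 else u)"
  and lb_def: "lbX = (if P = {} then -\<infinity> else ereal (Max (f`P)))"
  and ub_def: "ubX = (if N = {} then \<infinity> else ereal (Min (f`N)))"
  and val: "(al \<longrightarrow> 0 < e1 \<and> lbX + ereal e1 < ubX) \<and> (au \<longrightarrow> 0 < e2 \<and> ubX - ereal e2 > lbX)"
  shows "(\<forall>c\<in>P. f c \<le> r \<and> (strict c \<longrightarrow> f c < r)) \<and> (\<forall>c\<in>N. r \<le> f c \<and> (strict c \<longrightarrow> r < f c))"
proof -
  define L where "L = Max (f`P)"
  define U where "U = Min (f`N)"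
  have Lge: "\<And>c. c \<in> P \<Longrightarrow> f c \<le> L" unfolding L_def using fP by simp
  have Ule: "\<And>c. c \<in> N \<Longrightarrow> U \<le> f c" unfolding U_def using fN by simp
  have Lin: "P \<noteq> {} \<Longrightarrow> \<exists>c\<in>P. f c = L" unfolding L_def using fP
    by (metis (no_types, lifting) Max_in finite_imageI image_iff image_is_empty)
  have Uin: "N \<noteq> {} \<Longrightarrow> \<exists>c\<in>N. f c = U" unfolding U_def using fN
    by (metis (no_types, lifting) Min_in finite_imageI image_iff image_is_empty)
  show ?thesis
  proof (cases al)
    case True
    then obtain c0 where c0: "c0 \<in> P" "strict c0" "v = f c0" using al_def by auto
    then have Pne: "P \<noteq> {}" by auto
    have vL: "v = L" using c0 Lge[of c0] v_def Pne L_def by auto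
    have m: "m = L + e1" using True m_def vL by simp
    have e1: "0 < e1" "ereal L + ereal e1 < ubX" using val True lb_def Pne L_def by auto
    have mU: "N \<noteq> {} \<Longrightarrow> m < U" using e1 ub_def U_def m by auto
    have um: "u = m" using u_def mU U_def by auto
    have nau: "\<not> au" using au_def um mU Ule by force
    have r: "r = L + e1" using r_def nau um m by simp
    show ?thesis using r e1(1) Lge mU Ule um m by force
  next
    case False
    have mv: "m = v" using False m_def by simp
    show ?thesis
    proof (cases au)
      case True
      then obtain c1 where c1: "c1 \<in> N" "strict c1" "u = f c1" using au_def by auto
      then have Nne: "N \<noteq> {}" by auto
      have uU: "u = U" using c1 Ule[of c1] u_def Nne U_def by auto
      have e2: "0 < e2" "ereal U - ereal e2 > lbX" using val True ub_def Nne U_def by auto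
      have LU: "P \<noteq> {} \<Longrightarrow> L < U - e2" using e2 lb_def L_def by auto
      have r: "r = U - e2" using r_def True uU by simp
      show ?thesis using r e2(1) Lge LU Ule by force
    next
      case au: False
      have r: "r = u" using r_def au by simp
      have ruU: "N \<noteq> {} \<Longrightarrow> r \<le> U" using r u_def U_def by auto
      have Npart: "\<forall>c\<in>N. r \<le> f c \<and> (strict c \<longrightarrow> r < f c)"
      proof
        fix c assume c: "c \<in> N"
        have "r \<le> f c" using ruU c Ule[of c] by force
        moreover have "strict c \<longrightarrow> r \<noteq> f c" using au au_def r c by auto
        ultimately show "r \<le> f c \<and> (strict c \<longrightarrow> r < f c)" by auto
      qed
      have Ppart: "\<forall>c\<in>P. f c \<le> r \<and> (strict c \<longrightarrow> f c < r)"
      proof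
        fix c assume c: "c \<in> P"
        show "f c \<le> r \<and> (strict c \<longrightarrow> f c < r)"
        proof (cases "N = {} \<or> m \<le> U")
          case True
          then have "r = v" using r u_def mv U_def by auto
          moreover have "f c \<le> v" using v_def c Lge[of c] L_def by auto
          moreover have "strict c \<longrightarrow> v \<noteq> f c" using False al_def c by auto
          ultimately show ?thesis by auto
        next
          case F2: False
          then have Nne: "N \<noteq> {}" and "U < m" by auto
          then have "r = U" using r u_def U_def by auto
          obtain c1 where "c1 \<in> N" "f c1 = U" using Uin Nne by auto
          then show ?thesis using pair c \<open>r = U\<close> by force
        qed
      qed
      show ?thesis using Npart Ppart by blast
    qed
  qed
qed



lemma coord_sound:
  assumes fin: "finite (PiSet \<Pi> D i)" and i: "i \<in> {1..D}"
  and sy: "sat_set D (elim_step i (PiSet \<Pi> D i)) y"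
  and val: "valid_at \<Pi> D e i y a"
  shows "sat_set D (PiSet \<Pi> D i) (y(i := coord \<Pi> D e i y a))"
proof -
  define G where "G = PiSet \<Pi> D i"
  define P where "P = poss i G"
  define N where "N = negs i G"
  define f where "f c = epsv D c i y" for c
  define r where "r = coord \<Pi> D e i y a"
  have fP: "finite P" and fN: "finite N" using fin by (simp_all add: P_def N_def G_def poss_def negs_def)
  have pair: "\<forall>c1\<in>N. \<forall>c2\<in>P. f c2 \<le> f c1 \<and> (strict c1 \<or> strict c2 \<longrightarrow> f c2 < f c1)"
  proof (intro ballI)
    fix c1 c2 assume c: "c1 \<in> N" "c2 \<in> P"
    have "red i c1 c2 \<in> elim_step i G" using c unfolding elim_step_def N_def P_def by blast
    then have "sat D (red i c1 c2) y" using sy G_def sat_set_def by blast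
    then show "f c2 \<le> f c1 \<and> (strict c1 \<or> strict c2 \<longrightarrow> f c2 < f c1)"
      using fm_pair[OF i, of c1 G c2 y] c unfolding f_def N_def P_def by blast
  qed
  have res: "(\<forall>c\<in>P. f c \<le> r \<and> (strict c \<longrightarrow> f c < r)) \<and> (\<forall>c\<in>N. r \<le> f c \<and> (strict c \<longrightarrow> r < f c))"
  proof (rule core[OF fP fN pair])
    show "vmax \<Pi> D i y a = (if P = {} then a else max a (Max (f`P)))"
      unfolding vmax_def P_def G_def f_def by simp
    show "adj_low \<Pi> D i y a = (\<exists>c\<in>P. strict c \<and> vmax \<Pi> D i y a = f c)"
      unfolding adj_low_def P_def G_def f_def by simp
    show "maxi \<Pi> D e i y a = (if adj_low \<Pi> D i y a then vmax \<Pi> D i y a + e i False else vmax \<Pi> D i y a)"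
      unfolding maxi_def by simp
    show "umin \<Pi> D i y (maxi \<Pi> D e i y a) = (if N = {} then maxi \<Pi> D e i y a else min (maxi \<Pi> D e i y a) (Min (f`N)))"
      unfolding umin_def N_def G_def f_def by simp
    show "adj_up \<Pi> D i y (maxi \<Pi> D e i y a) = (\<exists>c\<in>N. strict c \<and> umin \<Pi> D i y (maxi \<Pi> D e i y a) = f c)"
      unfolding adj_up_def N_def G_def f_def by simp
    show "r = (if adj_up \<Pi> D i y (maxi \<Pi> D e i y a) then umin \<Pi> D i y (maxi \<Pi> D e i y a) - e i True else umin \<Pi> D i y (maxi \<Pi> D e i y a))"
      unfolding r_def coord_def mini_def by simp
    show "lbE \<Pi> D i y = (if P = {} then -\<infinity> else ereal (Max (f`P)))"
      unfolding lbE_def P_def G_def f_def by simp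
    show "ubE \<Pi> D i y = (if N = {} then \<infinity> else ereal (Min (f`N)))"
      unfolding ubE_def N_def G_def f_def by simp
    show "(adj_low \<Pi> D i y a \<longrightarrow> 0 < e i False \<and> lbE \<Pi> D i y + ereal (e i False) < ubE \<Pi> D i y) \<and>
      (adj_up \<Pi> D i y (maxi \<Pi> D e i y a) \<longrightarrow> 0 < e i True \<and> ubE \<Pi> D i y - ereal (e i True) > lbE \<Pi> D i y)"
      using val unfolding valid_at_def by simp
  qed
  show ?thesis unfolding sat_set_def
  proof
    fix c assume cG: "c \<in> PiSet \<Pi> D i"
    define z where "z = y(i := r)"
    have zi: "z i = r" unfolding z_def by simp
    have ez: "epsv D c i z = f c" unfolding z_def f_def by simp
    consider "wt c i = 0" | "wt c i > 0" | "wt c i < 0" by linarith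
    then show "sat D c (y(i := coord \<Pi> D e i y a))"
    proof cases
      case 1
      then have "c \<in> elim_step i G" using cG unfolding G_def elim_step_def negs_def poss_def by auto
      then have s: "sat D c y" using sy G_def sat_set_def by blast
      have "lhs D c z = lhs D c y" unfolding lhs_def z_def using 1
        by (intro arg_cong2[where f="(+)"] sum.cong) auto
      then show ?thesis using s unfolding sat_def z_def r_def by simp
    next
      case 2
      then have "c \<in> P" using cG unfolding P_def G_def poss_def by auto
      then have "f c \<le> r \<and> (strict c \<longrightarrow> f c < r)" using res by blast
      moreover have "lhs D c z = wt c i * (r - f c)" using lhs_eps[OF i] 2 zi ez by simp
      ultimately show ?thesis using 2 unfolding sat_def z_def r_def
        by (auto simp: zero_le_mult_iff zero_less_mult_iff)
    next
      case 3
      then have "c \<in> N" using cG unfolding N_def G_def negs_def by auto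
      then have "r \<le> f c \<and> (strict c \<longrightarrow> r < f c)" using res by blast
      moreover have "lhs D c z = wt c i * (r - f c)" using lhs_eps[OF i] 3 zi ez by simp
      ultimately show ?thesis using 3 unfolding sat_def z_def r_def
        by (auto simp: zero_le_mult_iff zero_less_mult_iff)
    qed
  qed
qed



lemma clp_out: "k = 0 \<or> n < k \<Longrightarrow> clp \<Pi> D e x n k = 0"
  by (induction n) auto

lemma clp_stable: "k \<le> n \<Longrightarrow> clp \<Pi> D e x n k = clp \<Pi> D e x k k"
  by (induction n) (auto simp: le_Suc_eq)

lemma PiSet0_lhs: "c \<in> PiSet \<Pi> D 0 \<Longrightarrow> lhs D c z = bias c"
  unfolding lhs_def using wt_zero_PiSet[of c \<Pi> D 0] by simp

lemma CL_sound_aux: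
  assumes fin: "finite \<Pi>" and sa: "satisfiable D \<Pi>" and ve: "valid_eps \<Pi> D e x"
  shows "i \<le> D \<Longrightarrow> sat_set D (PiSet \<Pi> D i) (clp \<Pi> D e x i)"
proof (induction i)
  case 0
  obtain z where z: "sat_set D \<Pi> z" using sa satisfiable_def by blast
  then have "sat_set D (PiSet \<Pi> D 0) z" by (rule PiSet_sound)
  then show ?case unfolding sat_set_def sat_def using PiSet0_lhs by metis
next
  case (Suc i)
  have i: "Suc i \<in> {1..D}" using Suc.prems by simp
  have e: "PiSet \<Pi> D i = elim_step (Suc i) (PiSet \<Pi> D (Suc i))"
    using PiSet_pred[of "Suc i" D \<Pi>] Suc.prems by simp
  have fi: "finite (PiSet \<Pi> D (Suc i))" unfolding PiSet_def using fin by (rule finite_fm)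
  have v: "valid_at \<Pi> D e (Suc i) (clp \<Pi> D e x i) (x (Suc i))" using ve i unfolding valid_eps_def by force
  have "sat_set D (PiSet \<Pi> D i) (clp \<Pi> D e x i)" using Suc by simp
  then have "sat_set D (PiSet \<Pi> D (Suc i)) ((clp \<Pi> D e x i)(Suc i := coord \<Pi> D e (Suc i) (clp \<Pi> D e x i) (x (Suc i))))"
    using coord_sound[OF fi i _ v] e by simp
  then show ?case by (simp only: clp.simps)
qed

lemma CL_sound:
  assumes "finite \<Pi>" "satisfiable D \<Pi>" "valid_eps \<Pi> D e x"
  shows "sat_set D \<Pi> (CL \<Pi> D e x)"
  using CL_sound_aux[OF assms, of D] by (simp add: CL_def PiSet_D)



lemma clamp1: fixes t a U w :: real shows "w = min a U \<Longrightarrow> \<bar>t - a\<bar> \<le> \<bar>w - a\<bar> \<Longrightarrow> t \<le> U \<Longrightarrow> t = w"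
  by (cases "a \<le> U") (auto simp: abs_if split: if_splits)
lemma clamp2: fixes t a L w :: real shows "w = max a L \<Longrightarrow> \<bar>t - a\<bar> \<le> \<bar>w - a\<bar> \<Longrightarrow> L \<le> t \<Longrightarrow> t = w"
  by (cases "a \<le> L") (auto simp: abs_if split: if_splits)
lemma clamp3: fixes t a L U w :: real shows "w = min (max a L) U \<Longrightarrow> \<bar>t - a\<bar> \<le> \<bar>w - a\<bar> \<Longrightarrow> L \<le> t \<Longrightarrow> t \<le> U \<Longrightarrow> t = w"
  by (auto simp: abs_if min_def max_def split: if_splits)

lemma clamp_opt:
  fixes t a b w :: real and Lv Uv :: "real set"
  assumes fL: "finite Lv" and fU: "finite Uv" and lt: "\<forall>l\<in>Lv. l \<le> t" and ut: "\<forall>u\<in>Uv. t \<le> u"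
  and b: "b = (if Lv = {} then a else max a (Max Lv))"
  and w: "w = (if Uv = {} then b else min b (Min Uv))"
  and d: "\<bar>t - a\<bar> \<le> \<bar>w - a\<bar>"
  shows "t = w"
proof (cases "Lv = {}")
  case True
  then have bb: "b = a" using b by simp
  show ?thesis
  proof (cases "Uv = {}")
    case True then show ?thesis using w bb d by simp
  next
    case False
    have "t \<le> Min Uv" using fU ut False by simp
    then show ?thesis using clamp1[of w a "Min Uv" t] w bb d False by simp
  qed
next
  case LF: False
  have L: "Max Lv \<le> t" using fL lt LF by simp
  have bb: "b = max a (Max Lv)" using b LF by simp
  show ?thesis
  proof (cases "Uv = {}")
    case True then show ?thesis using clamp2[of w a "Max Lv" t] w bb d L by simp
  next
    case False
    have "t \<le> Min Uv" using fU ut False by simp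
    then show ?thesis using clamp3[of w a "Max Lv" "Min Uv" t] w bb d False L by simp
  qed
qed

lemma CLge_coord:
  assumes i: "i \<in> {1..D}"
  shows "CLge \<Pi> D x i = umin \<Pi> D i (clp (geq_set \<Pi>) D (\<lambda>_ _. 0) x (i-1))
           (vmax \<Pi> D i (clp (geq_set \<Pi>) D (\<lambda>_ _. 0) x (i-1)) (x i))"
proof -
  obtain j where j: "i = Suc j" using i by (cases i) auto
  have "CLge \<Pi> D x i = clp (geq_set \<Pi>) D (\<lambda>_ _. 0) x i i"
    unfolding CLge_def CL_def using i clp_stable[of i D] by auto
  then show ?thesis using j by (simp add: coord_geq0)
qed

lemma CLge_opt:
  assumes sx: "sat_set D \<Pi> x'"
  and d: "\<forall>i\<in>{1..D}. \<bar>x' i - x i\<bar> \<le> \<bar>CLge \<Pi> D x i - x i\<bar>"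
  and fin: "finite \<Pi>"
  shows "i \<in> {1..D} \<Longrightarrow> x' i = CLge \<Pi> D x i"
proof (induction i rule: less_induct)
  case (less i)
  define y' where "y' = clp (geq_set \<Pi>) D (\<lambda>_ _. 0) x (i-1)"
  define P where "P = poss i (PiSet \<Pi> D i)"
  define N where "N = negs i (PiSet \<Pi> D i)"
  have fPi: "finite (PiSet \<Pi> D i)" unfolding PiSet_def using fin by (rule finite_fm)
  have sPi: "sat_set D (PiSet \<Pi> D i) x'" using sx by (rule PiSet_sound)
  have econg: "epsv D c i y' = epsv D c i x'" if c: "c \<in> PiSet \<Pi> D i" for c
  proof (rule epsv_cong)
    fix k assume k: "k \<in> {1..D}" "k \<noteq> i" "wt c k \<noteq> 0"
    have "k < i" using wt_zero_PiSet[OF c, of k] k by (cases "i < k") auto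
    then have "x' k = CLge \<Pi> D x k" using less k by auto
    also have "\<dots> = clp (geq_set \<Pi>) D (\<lambda>_ _. 0) x k k" unfolding CLge_def CL_def using k clp_stable[of k D] by auto
    also have "\<dots> = y' k" unfolding y'_def using \<open>k < i\<close> clp_stable[of k "i-1"] by simp
    finally show "y' k = x' k" by simp
  qed
  have lt: "\<forall>l\<in>(\<lambda>c. epsv D c i y') ` P. l \<le> x' i"
  proof
    fix l assume "l \<in> (\<lambda>c. epsv D c i y') ` P"
    then obtain c where c: "c \<in> PiSet \<Pi> D i" "wt c i > 0" "l = epsv D c i y'" unfolding P_def poss_def by auto
    have "lhs D c x' \<ge> 0" using sPi c sat_ge sat_set_def by blast
    then have "wt c i * (x' i - epsv D c i x') \<ge> 0" using lhs_eps[OF less.prems] c by simp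
    then show "l \<le> x' i" using c econg by (simp add: zero_le_mult_iff)
  qed
  have ut: "\<forall>l\<in>(\<lambda>c. epsv D c i y') ` N. x' i \<le> l"
  proof
    fix l assume "l \<in> (\<lambda>c. epsv D c i y') ` N"
    then obtain c where c: "c \<in> PiSet \<Pi> D i" "wt c i < 0" "l = epsv D c i y'" unfolding N_def negs_def by auto
    have "lhs D c x' \<ge> 0" using sPi c sat_ge sat_set_def by blast
    then have "wt c i * (x' i - epsv D c i x') \<ge> 0" using lhs_eps[OF less.prems] c by simp
    then show "x' i \<le> l" using c econg by (simp add: zero_le_mult_iff)
  qed
  show ?case
  proof (rule clamp_opt[OF _ _ lt ut])
    show "finite ((\<lambda>c. epsv D c i y') ` P)" "finite ((\<lambda>c. epsv D c i y') ` N)"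
      using fPi by (simp_all add: P_def N_def poss_def negs_def)
    show "vmax \<Pi> D i y' (x i) = (if (\<lambda>c. epsv D c i y') ` P = {} then x i else max (x i) (Max ((\<lambda>c. epsv D c i y') ` P)))"
      unfolding vmax_def P_def by simp
    show "CLge \<Pi> D x i = (if (\<lambda>c. epsv D c i y') ` N = {} then vmax \<Pi> D i y' (x i) else min (vmax \<Pi> D i y' (x i)) (Min ((\<lambda>c. epsv D c i y') ` N)))"
      unfolding CLge_coord[OF less.prems] y'_def[symmetric] umin_def N_def by simp
    show "\<bar>x' i - x i\<bar> \<le> \<bar>CLge \<Pi> D x i - x i\<bar>" using d less.prems by blast
  qed
qed



definition dd :: "nat \<Rightarrow> (nat \<Rightarrow> real) \<Rightarrow> (nat \<Rightarrow> real) \<Rightarrow> real" where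
  "dd D y y' = (\<Sum>k\<in>{1..D}. \<bar>y k - y' k\<bar>)"

definition Kc :: "nat \<Rightarrow> constr \<Rightarrow> nat \<Rightarrow> real" where
  "Kc D c i = (\<Sum>k\<in>{1..D}. \<bar>wt c k / wt c i\<bar>)"

lemma dd_nonneg: "0 \<le> dd D y y'" unfolding dd_def by (simp add: sum_nonneg)
lemma Kc_nonneg: "0 \<le> Kc D c i" unfolding Kc_def by (simp add: sum_nonneg)

lemma dd_ge: "k \<in> {1..D} \<Longrightarrow> \<bar>y k - y' k\<bar> \<le> dd D y y'"
  unfolding dd_def by (rule member_le_sum) auto

lemma epsv_lip: "\<bar>epsv D c i y - epsv D c i y'\<bar> \<le> Kc D c i * dd D y y'"
proof -
  let ?S = "{1..D} - {i}"
  have h: "(\<Sum>k\<in>?S. (wt c k / wt c i) * y k) - (\<Sum>k\<in>?S. (wt c k / wt c i) * y' k) = (\<Sum>k\<in>?S. (wt c k / wt c i) * (y k - y' k))"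
    by (simp add: sum_subtractf[symmetric] right_diff_distrib)
  have "epsv D c i y - epsv D c i y' = - (\<Sum>k\<in>?S. (wt c k / wt c i) * (y k - y' k))"
    unfolding epsv_def h[symmetric] by simp
  then have "\<bar>epsv D c i y - epsv D c i y'\<bar> = \<bar>\<Sum>k\<in>?S. (wt c k / wt c i) * (y k - y' k)\<bar>" by simp
  also have "\<dots> \<le> (\<Sum>k\<in>?S. \<bar>(wt c k / wt c i) * (y k - y' k)\<bar>)" by (rule sum_abs)
  also have "\<dots> \<le> (\<Sum>k\<in>?S. \<bar>wt c k / wt c i\<bar> * dd D y y')"
  proof (rule sum_mono)
    fix k assume "k \<in> ?S"
    then have "\<bar>y k - y' k\<bar> \<le> dd D y y'" by (intro dd_ge) auto
    then show "\<bar>(wt c k / wt c i) * (y k - y' k)\<bar> \<le> \<bar>wt c k / wt c i\<bar> * dd D y y'"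
      unfolding abs_mult by (rule mult_left_mono) simp
  qed
  also have "\<dots> \<le> (\<Sum>k\<in>{1..D}. \<bar>wt c k / wt c i\<bar> * dd D y y')"
    by (rule sum_mono2) (auto simp: dd_nonneg)
  also have "\<dots> = Kc D c i * dd D y y'" unfolding Kc_def by (simp add: sum_distrib_right)
  finally show ?thesis .
qed

lemma Max_lip:
  assumes "finite S" "S \<noteq> {}" "\<forall>c\<in>S. \<bar>f c - g c\<bar> \<le> (r::real)"
  shows "\<bar>Max (f`S) - Max (g`S)\<bar> \<le> r"
proof -
  obtain c1 where c1: "c1 \<in> S" "f c1 = Max (f`S)"
    using assms by (metis (no_types, lifting) Max_in finite_imageI image_iff image_is_empty)
  obtain c2 where c2: "c2 \<in> S" "g c2 = Max (g`S)"
    using assms by (metis (no_types, lifting) Max_in finite_imageI image_iff image_is_empty)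
  have "g c1 \<le> Max (g`S)" "f c2 \<le> Max (f`S)" using assms c1 c2 by auto
  moreover have "\<bar>f c1 - g c1\<bar> \<le> r" "\<bar>f c2 - g c2\<bar> \<le> r" using assms(3) c1 c2 by auto
  ultimately show ?thesis using c1 c2 by (simp add: abs_le_iff)
qed

lemma Min_lip:
  assumes "finite S" "S \<noteq> {}" "\<forall>c\<in>S. \<bar>f c - g c\<bar> \<le> (r::real)"
  shows "\<bar>Min (f`S) - Min (g`S)\<bar> \<le> r"
proof -
  obtain c1 where c1: "c1 \<in> S" "f c1 = Min (f`S)"
    using assms by (metis (no_types, lifting) Min_in finite_imageI image_iff image_is_empty)
  obtain c2 where c2: "c2 \<in> S" "g c2 = Min (g`S)"
    using assms by (metis (no_types, lifting) Min_in finite_imageI image_iff image_is_empty)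
  have "Min (g`S) \<le> g c1" "Min (f`S) \<le> f c2" using assms c1 c2 by auto
  moreover have "\<bar>f c1 - g c1\<bar> \<le> r" "\<bar>f c2 - g c2\<bar> \<le> r" using assms(3) c1 c2 by auto
  ultimately show ?thesis using c1 c2 by (simp add: abs_le_iff)
qed

definition Lc :: "constr set \<Rightarrow> nat \<Rightarrow> real" where
  "Lc \<Pi> D = (\<Sum>i\<in>{1..D}. \<Sum>c\<in>PiSet \<Pi> D i. Kc D c i)"

lemma Lc_nonneg: "0 \<le> Lc \<Pi> D" unfolding Lc_def by (simp add: sum_nonneg Kc_nonneg)

lemma Kc_le_Lc: assumes "finite \<Pi>" "i \<in> {1..D}" "c \<in> PiSet \<Pi> D i"
  shows "Kc D c i \<le> Lc \<Pi> D"
proof -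
  have f: "finite (PiSet \<Pi> D i)" unfolding PiSet_def using assms(1) by (rule finite_fm)
  have "Kc D c i \<le> (\<Sum>c\<in>PiSet \<Pi> D i. Kc D c i)"
    using f assms(3) by (intro member_le_sum) (auto simp: Kc_nonneg)
  also have "\<dots> \<le> Lc \<Pi> D" unfolding Lc_def using assms(2)
    by (intro member_le_sum[where f="\<lambda>i. \<Sum>c\<in>PiSet \<Pi> D i. Kc D c i"]) (auto simp: sum_nonneg Kc_nonneg)
  finally show ?thesis .
qed

lemma epsv_lip2: assumes "finite \<Pi>" "i \<in> {1..D}" "c \<in> PiSet \<Pi> D i"
  shows "\<bar>epsv D c i y - epsv D c i y'\<bar> \<le> Lc \<Pi> D * dd D y y'"
  using epsv_lip[of D c i y y'] Kc_le_Lc[OF assms] dd_nonneg[of D y y']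
  by (meson mult_right_mono order_trans)

lemma max_lip: "\<bar>max (a::real) M - max a M'\<bar> \<le> \<bar>M - M'\<bar>" by (auto simp: max_def abs_if)
lemma min_lip: "\<bar>min (b::real) M - min b' M'\<bar> \<le> \<bar>b - b'\<bar> + \<bar>M - M'\<bar>" by (auto simp: min_def abs_if)

lemma vmax_lip: assumes "finite \<Pi>" "i \<in> {1..D}"
  shows "\<bar>vmax \<Pi> D i y a - vmax \<Pi> D i y' a\<bar> \<le> Lc \<Pi> D * dd D y y'"
proof (cases "poss i (PiSet \<Pi> D i) = {}")
  case True then show ?thesis by (simp add: vmax_def Lc_nonneg dd_nonneg)
next
  case False
  have f: "finite (poss i (PiSet \<Pi> D i))" using finite_fm[OF assms(1)] unfolding PiSet_def poss_def by simp
  have "\<bar>Max ((\<lambda>c. epsv D c i y) ` poss i (PiSet \<Pi> D i)) - Max ((\<lambda>c. epsv D c i y') ` poss i (PiSet \<Pi> D i))\<bar> \<le> Lc \<Pi> D * dd D y y'"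
    by (rule Max_lip[OF f False]) (auto simp: poss_def intro!: epsv_lip2[OF assms])
  then show ?thesis using False unfolding vmax_def
    using max_lip[of a "Max ((\<lambda>c. epsv D c i y) ` poss i (PiSet \<Pi> D i))" "Max ((\<lambda>c. epsv D c i y') ` poss i (PiSet \<Pi> D i))"] by simp
qed

lemma umin_lip: assumes "finite \<Pi>" "i \<in> {1..D}"
  shows "\<bar>umin \<Pi> D i y b - umin \<Pi> D i y' b'\<bar> \<le> \<bar>b - b'\<bar> + Lc \<Pi> D * dd D y y'"
proof (cases "negs i (PiSet \<Pi> D i) = {}")
  case True then show ?thesis using Lc_nonneg dd_nonneg by (simp add: umin_def)
next
  case False
  have f: "finite (negs i (PiSet \<Pi> D i))" using finite_fm[OF assms(1)] unfolding PiSet_def negs_def by simp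
  have "\<bar>Min ((\<lambda>c. epsv D c i y) ` negs i (PiSet \<Pi> D i)) - Min ((\<lambda>c. epsv D c i y') ` negs i (PiSet \<Pi> D i))\<bar> \<le> Lc \<Pi> D * dd D y y'"
    by (rule Min_lip[OF f False]) (auto simp: negs_def intro!: epsv_lip2[OF assms])
  then show ?thesis using False unfolding umin_def
    using min_lip[of b "Min ((\<lambda>c. epsv D c i y) ` negs i (PiSet \<Pi> D i))" b' "Min ((\<lambda>c. epsv D c i y') ` negs i (PiSet \<Pi> D i))"] by simp
qed

lemma umin_1lip: "\<bar>umin \<Pi> D i y b - umin \<Pi> D i y b'\<bar> \<le> \<bar>b - b'\<bar>"
  unfolding umin_def using min_lip[of b _ b'] by auto

lemma coord_err: assumes "finite \<Pi>" "i \<in> {1..D}" "\<forall>s. \<bar>e i s\<bar> < \<eta>"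
  shows "\<bar>coord \<Pi> D e i y a - umin \<Pi> D i y' (vmax \<Pi> D i y' a)\<bar> \<le> 2 * \<eta> + 2 * Lc \<Pi> D * dd D y y'"
proof -
  define m where "m = maxi \<Pi> D e i y a"
  have m1: "\<bar>m - vmax \<Pi> D i y a\<bar> \<le> \<eta>" unfolding m_def maxi_def using assms(3)[rule_format, of False] by auto
  have m2: "\<bar>coord \<Pi> D e i y a - umin \<Pi> D i y m\<bar> \<le> \<eta>" unfolding coord_def m_def[symmetric] mini_def
    using assms(3)[rule_format, of True] by auto
  have m3: "\<bar>umin \<Pi> D i y m - umin \<Pi> D i y' (vmax \<Pi> D i y' a)\<bar> \<le> \<bar>m - vmax \<Pi> D i y' a\<bar> + Lc \<Pi> D * dd D y y'"
    by (rule umin_lip[OF assms(1,2)])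
  have m4: "\<bar>vmax \<Pi> D i y a - vmax \<Pi> D i y' a\<bar> \<le> Lc \<Pi> D * dd D y y'" by (rule vmax_lip[OF assms(1,2)])
  show ?thesis using m1 m2 m3 m4 by linarith
qed

lemma dd_upd: "dd D (f(j:=u)) (g(j:=v)) \<le> dd D f g + \<bar>u - v\<bar>"
proof -
  have "dd D (f(j:=u)) (g(j:=v)) \<le> (\<Sum>k\<in>{1..D}. \<bar>f k - g k\<bar> + (if k = j then \<bar>u - v\<bar> else 0))"
    unfolding dd_def by (rule sum_mono) auto
  also have "\<dots> = dd D f g + (\<Sum>k\<in>{1..D}. (if k = j then \<bar>u - v\<bar> else 0))"
    unfolding dd_def by (simp add: sum.distrib)
  also have "(\<Sum>k\<in>{1..D}. (if k = j then \<bar>u - v\<bar> else 0)) \<le> \<bar>u - v\<bar>"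
    by (simp add: sum.delta)
  finally show ?thesis by simp
qed

fun cb :: "real \<Rightarrow> nat \<Rightarrow> real" where
  "cb L 0 = 0"
| "cb L (Suc n) = (1 + 2 * L) * cb L n + 2"

lemma cb_nonneg: "0 \<le> L \<Longrightarrow> 0 \<le> cb L n"
  by (induction n) auto

lemma err_bound:
  assumes fin: "finite \<Pi>" and eta: "\<forall>i\<in>{1..D}. \<forall>s. \<bar>e i s\<bar> < \<eta>"
  shows "i \<le> D \<Longrightarrow> dd D (clp \<Pi> D e x i) (clp (geq_set \<Pi>) D (\<lambda>_ _. 0) x i) \<le> cb (Lc \<Pi> D) i * \<eta>"
proof (induction i)
  case 0 then show ?case by (simp add: dd_def)
next
  case (Suc i)
  let ?y = "clp \<Pi> D e x i" and ?y' = "clp (geq_set \<Pi>) D (\<lambda>_ _. 0) x i"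
  have i: "Suc i \<in> {1..D}" using Suc.prems by simp
  have IH: "dd D ?y ?y' \<le> cb (Lc \<Pi> D) i * \<eta>" using Suc by simp
  have "dd D (clp \<Pi> D e x (Suc i)) (clp (geq_set \<Pi>) D (\<lambda>_ _. 0) x (Suc i))
     \<le> dd D ?y ?y' + \<bar>coord \<Pi> D e (Suc i) ?y (x (Suc i)) - umin \<Pi> D (Suc i) ?y' (vmax \<Pi> D (Suc i) ?y' (x (Suc i)))\<bar>"
    using dd_upd by (simp add: coord_geq0)
  also have "\<dots> \<le> dd D ?y ?y' + (2 * \<eta> + 2 * Lc \<Pi> D * dd D ?y ?y')"
    using coord_err[OF fin i] eta i by (meson add_left_mono)
  also have "\<dots> = (1 + 2 * Lc \<Pi> D) * dd D ?y ?y' + 2 * \<eta>" by (simp add: algebra_simps)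
  also have "\<dots> \<le> (1 + 2 * Lc \<Pi> D) * (cb (Lc \<Pi> D) i * \<eta>) + 2 * \<eta>"
    using IH Lc_nonneg[of \<Pi> D] by (intro add_right_mono mult_left_mono) auto
  also have "\<dots> = cb (Lc \<Pi> D) (Suc i) * \<eta>" by (simp add: algebra_simps)
  finally show ?case .
qed



theorem theorem3:
  fixes \<Pi> :: "constr set" and D :: nat and x :: "nat \<Rightarrow> real"
  assumes "finite \<Pi>" and "satisfiable D \<Pi>"
  shows "(\<forall>e. valid_eps \<Pi> D e x \<longrightarrow> CL \<Pi> D e x = CLge \<Pi> D x \<longrightarrow> optimal D \<Pi> x (CL \<Pi> D e x))
       \<and> (\<forall>e. valid_eps \<Pi> D e x \<longrightarrow> CL \<Pi> D e x \<noteq> CLge \<Pi> D x \<longrightarrow>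
            (\<forall>\<delta>>0. \<exists>\<eta>>0. \<forall>e'. valid_eps \<Pi> D e' x \<longrightarrow>
                (\<forall>i\<in>{1..D}. \<forall>s. \<bar>e' i s\<bar> < \<eta>) \<longrightarrow>
                (\<forall>i\<in>{1..D}. \<bar>CL \<Pi> D e' x i - CLge \<Pi> D x i\<bar> < \<delta>)))"
proof (intro conjI allI impI)
  fix e assume v: "valid_eps \<Pi> D e x" and eq: "CL \<Pi> D e x = CLge \<Pi> D x"
  have s: "sat_set D \<Pi> (CL \<Pi> D e x)" using CL_sound[OF assms v] .
  show "optimal D \<Pi> x (CL \<Pi> D e x)"
    unfolding optimal_def
  proof (intro conjI s notI)
    assume "\<exists>x'. sat_set D \<Pi> x' \<and> (\<exists>i\<in>{1..D}. x' i \<noteq> CL \<Pi> D e x i) \<and>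
            (\<forall>i\<in>{1..D}. \<bar>x' i - x i\<bar> \<le> \<bar>CL \<Pi> D e x i - x i\<bar>)"
    then obtain x' i where x': "sat_set D \<Pi> x'" "i \<in> {1..D}" "x' i \<noteq> CL \<Pi> D e x i"
      "\<forall>i\<in>{1..D}. \<bar>x' i - x i\<bar> \<le> \<bar>CLge \<Pi> D x i - x i\<bar>" using eq by metis
    have "x' i = CLge \<Pi> D x i" using CLge_opt[OF x'(1) x'(4) assms(1) x'(2)] .
    then show False using x'(3) eq by simp
  qed
next
  fix e :: "nat \<Rightarrow> bool \<Rightarrow> real" and \<delta> :: real
  assume "valid_eps \<Pi> D e x" "CL \<Pi> D e x \<noteq> CLge \<Pi> D x" and d: "0 < \<delta>"
  define C where "C = cb (Lc \<Pi> D) D"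
  have C0: "0 \<le> C" unfolding C_def by (rule cb_nonneg[OF Lc_nonneg])
  define \<eta> where "\<eta> = \<delta> / (C + 1)"
  have eta: "0 < \<eta>" unfolding \<eta>_def using d C0 by simp
  have Ceta: "C * \<eta> < \<delta>" unfolding \<eta>_def using d C0 by (simp add: field_simps)
  show "\<exists>\<eta>>0. \<forall>e'. valid_eps \<Pi> D e' x \<longrightarrow>
                (\<forall>i\<in>{1..D}. \<forall>s. \<bar>e' i s\<bar> < \<eta>) \<longrightarrow>
                (\<forall>i\<in>{1..D}. \<bar>CL \<Pi> D e' x i - CLge \<Pi> D x i\<bar> < \<delta>)"
  proof (intro exI[of _ \<eta>] conjI eta allI impI ballI)
    fix e' :: "nat \<Rightarrow> bool \<Rightarrow> real" and i assume b: "\<forall>i\<in>{1..D}. \<forall>s. \<bar>e' i s\<bar> < \<eta>" and i: "i \<in> {1..D}"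
    have "\<bar>CL \<Pi> D e' x i - CLge \<Pi> D x i\<bar> \<le> dd D (CL \<Pi> D e' x) (CLge \<Pi> D x)" using i by (rule dd_ge)
    also have "\<dots> \<le> C * \<eta>" unfolding CL_def CLge_def C_def using err_bound[OF assms(1) b, of D] by simp
    finally show "\<bar>CL \<Pi> D e' x i - CLge \<Pi> D x i\<bar> < \<delta>" using Ceta by simp
  qed
qed


end
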